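(* Let $Z_\bullet$ be a semi-simplicial space and $Y_\bullet$ a semi-simplicial subspace which is full relative to $Z_\bullet$. If each inclusion $Y_n\hookrightarrow Z_n$ is a closed inclusion, then the induced map of geometric realisations $\|Y_\bullet\|\to\|Z_\bullet\|$ is a closed inclusion. The same holds with "closed inclusion" replaced by "open inclusion".
   Context: The geometric realisation $\|Z_\bullet\|$ is $\bigsqcup_{n\geq0}\Delta^n\times Z_n$ modulo the face relations, and $\|Z_\bullet\|^{(n)}$ denotes its $n$-skeleton (image of simplices of dimension $\leq n$). A semi-simplicial subspace $Y_\bullet\subseteq Z_\bullet$ (subspaces $Y_n\subseteq Z_n$ closed under the face maps) is full relative to $Z_\bullet$ if for each $n$ the square with maps $\Delta^n\times Y_n\to\Delta^n\times Z_n$, $\Delta^n\times Y_n\to\|Y_\bullet\|^{(n)}$, $\Delta^n\times Z_n\to\|Z_\bullet\|^{(n)}$, $\|Y_\bullet\|^{(n)}\to\|Z_\bullet\|^{(n)}$ is Cartesian in the category of sets; equivalently, a simplex $\sigma\in Z_n$ lies in $Y_n$ whenever at least one of its vertices lies in $Y_0$. *)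

theory Defs
  imports "HOL-Analysis.Analysis"
begin

definition quot_topology :: "'a topology \<Rightarrow> ('a \<Rightarrow> 'b) \<Rightarrow> 'b topology" where
  "quot_topology X q =
     topology (\<lambda>U. U \<subseteq> q ` topspace X \<and> openin X {x \<in> topspace X. q x \<in> U})"

lemma istopology_quot_topology:
  "istopology (\<lambda>U. U \<subseteq> q ` topspace X \<and> openin X {x \<in> topspace X. q x \<in> U})"
proof -
  have 1: "{x \<in> topspace X. q x \<in> S \<inter> T} =
      {x \<in> topspace X. q x \<in> S} \<inter> {x \<in> topspace X. q x \<in> T}" for S T by auto
  have 2: "{x \<in> topspace X. q x \<in> \<Union>K} = (\<Union>S\<in>K. {x \<in> topspace X. q x \<in> S})" for K
    by auto
  show ?thesis unfolding istopology_def 1 2 by auto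
qed

lemma openin_quot_topology:
  "openin (quot_topology X q) U \<longleftrightarrow>
     U \<subseteq> q ` topspace X \<and> openin X {x \<in> topspace X. q x \<in> U}"
  by (simp add: quot_topology_def istopology_quot_topology)

text \<open>The standard n-simplex, as points t of nat \<Rightarrow> real (product topology) with
  t i \<ge> 0, t i = 0 for i > n and t 0 + ... + t n = 1.\<close>

definition std_simplex :: "nat \<Rightarrow> (nat \<Rightarrow> real) set" where
  "std_simplex n = {t. (\<forall>i. 0 \<le> t i) \<and> (\<forall>i>n. t i = 0) \<and> (\<Sum>i\<le>n. t i) = 1}"

definition coface :: "nat \<Rightarrow> (nat \<Rightarrow> real) \<Rightarrow> (nat \<Rightarrow> real)" where
  "coface i t = (\<lambda>j. if j < i then t j else if j = i then 0 else t (j - 1))"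

definition semi_simplicial_space ::
  "(nat \<Rightarrow> 'a topology) \<Rightarrow> (nat \<Rightarrow> nat \<Rightarrow> 'a \<Rightarrow> 'a) \<Rightarrow> bool" where
  "semi_simplicial_space Z d \<longleftrightarrow>
     (\<forall>n i. i \<le> Suc n \<longrightarrow> continuous_map (Z (Suc n)) (Z n) (d n i)) \<and>
     (\<forall>n i j z. i < j \<and> j \<le> Suc (Suc n) \<and> z \<in> topspace (Z (Suc (Suc n))) \<longrightarrow>
        d n i (d (Suc n) j z) = d n (j - 1) (d (Suc n) i z))"

definition total_space ::
  "(nat \<Rightarrow> 'a topology) \<Rightarrow> (nat \<times> (nat \<Rightarrow> real) \<times> 'a) topology" where
  "total_space Z = sum_topology (\<lambda>n. prod_topology (top_of_set (std_simplex n)) (Z n)) UNIV"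

definition face_rel ::
  "(nat \<Rightarrow> 'a topology) \<Rightarrow> (nat \<Rightarrow> nat \<Rightarrow> 'a \<Rightarrow> 'a) \<Rightarrow>
   ((nat \<times> (nat \<Rightarrow> real) \<times> 'a) \<times> (nat \<times> (nat \<Rightarrow> real) \<times> 'a)) set" where
  "face_rel Z d = {((Suc n, (coface i t, z)), (n, (t, d n i z))) | n i t z.
       i \<le> Suc n \<and> t \<in> std_simplex n \<and> z \<in> topspace (Z (Suc n))}"

definition real_rel ::
  "(nat \<Rightarrow> 'a topology) \<Rightarrow> (nat \<Rightarrow> nat \<Rightarrow> 'a \<Rightarrow> 'a) \<Rightarrow>
   ((nat \<times> (nat \<Rightarrow> real) \<times> 'a) \<times> (nat \<times> (nat \<Rightarrow> real) \<times> 'a)) set" where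
  "real_rel Z d = {(p, q). p \<in> topspace (total_space Z) \<and>
                          (p, q) \<in> (face_rel Z d \<union> (face_rel Z d)\<inverse>)\<^sup>*}"

definition real_class ::
  "(nat \<Rightarrow> 'a topology) \<Rightarrow> (nat \<Rightarrow> nat \<Rightarrow> 'a \<Rightarrow> 'a) \<Rightarrow>
   nat \<times> (nat \<Rightarrow> real) \<times> 'a \<Rightarrow> (nat \<times> (nat \<Rightarrow> real) \<times> 'a) set" where
  "real_class Z d p = real_rel Z d `` {p}"

definition geom_real ::
  "(nat \<Rightarrow> 'a topology) \<Rightarrow> (nat \<Rightarrow> nat \<Rightarrow> 'a \<Rightarrow> 'a) \<Rightarrow>
   (nat \<times> (nat \<Rightarrow> real) \<times> 'a) set topology" where
  "geom_real Z d = quot_topology (total_space Z) (real_class Z d)"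

definition skeleton ::
  "(nat \<Rightarrow> 'a topology) \<Rightarrow> (nat \<Rightarrow> nat \<Rightarrow> 'a \<Rightarrow> 'a) \<Rightarrow> nat \<Rightarrow>
   (nat \<times> (nat \<Rightarrow> real) \<times> 'a) set set" where
  "skeleton Z d n = real_class Z d ` {p \<in> topspace (total_space Z). fst p \<le> n}"

definition sub_ss :: "(nat \<Rightarrow> 'a topology) \<Rightarrow> (nat \<Rightarrow> 'a set) \<Rightarrow> nat \<Rightarrow> 'a topology" where
  "sub_ss Z S n = subtopology (Z n) (S n)"

definition semi_simplicial_subspace ::
  "(nat \<Rightarrow> 'a topology) \<Rightarrow> (nat \<Rightarrow> nat \<Rightarrow> 'a \<Rightarrow> 'a) \<Rightarrow> (nat \<Rightarrow> 'a set) \<Rightarrow> bool" where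
  "semi_simplicial_subspace Z d S \<longleftrightarrow>
     (\<forall>n. S n \<subseteq> topspace (Z n)) \<and>
     (\<forall>n i y. i \<le> Suc n \<and> y \<in> S (Suc n) \<longrightarrow> d n i y \<in> S n)"

text \<open>The induced map \<parallel>Y\<parallel> \<rightarrow> \<parallel>Z\<parallel>: a Y-class is sent to the Z-class containing it.\<close>

definition induced_real_map ::
  "(nat \<Rightarrow> 'a topology) \<Rightarrow> (nat \<Rightarrow> nat \<Rightarrow> 'a \<Rightarrow> 'a) \<Rightarrow>
   (nat \<times> (nat \<Rightarrow> real) \<times> 'a) set \<Rightarrow> (nat \<times> (nat \<Rightarrow> real) \<times> 'a) set" where
  "induced_real_map Z d c = real_rel Z d `` c"

text \<open>Fullness: for each n the square
  \<Delta>^n \<times> Y_n \<rightarrow> \<Delta>^n \<times> Z_n,  \<Delta>^n \<times> Y_n \<rightarrow> \<parallel>Y\<parallel>^(n),  \<Delta>^n \<times> Z_n \<rightarrow> \<parallel>Z\<parallel>^(n),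
  \<parallel>Y\<parallel>^(n) \<rightarrow> \<parallel>Z\<parallel>^(n)
  is Cartesian in sets, i.e. the canonical map from \<Delta>^n \<times> Y_n to the pullback
  is a bijection.\<close>

definition full_rel ::
  "(nat \<Rightarrow> 'a topology) \<Rightarrow> (nat \<Rightarrow> nat \<Rightarrow> 'a \<Rightarrow> 'a) \<Rightarrow> (nat \<Rightarrow> 'a set) \<Rightarrow> bool" where
  "full_rel Z d S \<longleftrightarrow>
     (\<forall>n. bij_betw
        (\<lambda>(t, y). ((t, y), real_class (sub_ss Z S) d (n, (t, y))))
        (std_simplex n \<times> topspace (sub_ss Z S n))
        {((t, z), c). (t, z) \<in> std_simplex n \<times> topspace (Z n) \<and>
                      c \<in> skeleton (sub_ss Z S) d n \<and>
                      real_class Z d (n, (t, z)) = induced_real_map Z d c})"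

definition closed_inclusion :: "'a topology \<Rightarrow> 'b topology \<Rightarrow> ('a \<Rightarrow> 'b) \<Rightarrow> bool" where
  "closed_inclusion X Y f \<longleftrightarrow> embedding_map X Y f \<and> closedin Y (f ` topspace X)"

definition open_inclusion :: "'a topology \<Rightarrow> 'b topology \<Rightarrow> ('a \<Rightarrow> 'b) \<Rightarrow> bool" where
  "open_inclusion X Y f \<longleftrightarrow> embedding_map X Y f \<and> openin Y (f ` topspace X)"

end

theory Submission imports Defs begin

lemma coface_simplex:
  assumes t: "t \<in> std_simplex n" and i: "i \<le> Suc n"
  shows "coface i t \<in> std_simplex (Suc n)"
proof -
  define c where "c = coface i t"
  define h where "h = (\<lambda>j::nat. if j < i then j else Suc j)"
  define h' where "h' = (\<lambda>j::nat. if j < i then j else j - 1)"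
  have bij: "bij_betw h {..n} ({..Suc n} - {i})"
  proof (rule bij_betw_byWitness[where f'=h'])
    show "\<forall>a\<in>{..n}. h' (h a) = a" unfolding h_def h'_def by simp
    show "\<forall>a\<in>{..Suc n} - {i}. h (h' a) = a" unfolding h_def h'_def by (auto split: if_splits)
    show "h ` {..n} \<subseteq> {..Suc n} - {i}" unfolding h_def by force
    show "h' ` ({..Suc n} - {i}) \<subseteq> {..n}" unfolding h'_def using i by (auto split: if_splits)
  qed
  have ch: "c (h j) = t j" for j by (simp add: coface_def c_def h_def)
  have fin: "finite {..Suc n}" by simp
  have "(\<Sum>j\<le>Suc n. c j) = c i + (\<Sum>j\<in>{..Suc n} - {i}. c j)"
    using sum.remove[OF fin, of i c] i by simp
  also have "(\<Sum>j\<in>{..Suc n} - {i}. c j) = (\<Sum>j\<le>n. c (h j))"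
    using sum.reindex_bij_betw[OF bij, of c] by simp
  also have "\<dots> = (\<Sum>j\<le>n. t j)" by (simp only: ch)
  finally have "(\<Sum>j\<le>Suc n. c j) = 1" using t by (simp add: std_simplex_def coface_def c_def)
  moreover have "\<forall>j. 0 \<le> c j" using t by (simp add: std_simplex_def coface_def c_def)
  moreover have "\<forall>j>Suc n. c j = 0" using t by (auto simp: std_simplex_def coface_def c_def)
  ultimately show ?thesis by (simp add: std_simplex_def c_def)
qed

lemma topspace_total_space:
  "topspace (total_space Z) = Sigma UNIV (\<lambda>n. std_simplex n \<times> topspace (Z n))"
  by (auto simp: total_space_def)

lemma topspace_quot: "topspace (quot_topology X q) = q ` topspace X"
proof
  show "topspace (quot_topology X q) \<subseteq> q ` topspace X"
    using openin_quot_topology[of X q "topspace (quot_topology X q)"] by simp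
  have e: "{x \<in> topspace X. q x \<in> q ` topspace X} = topspace X" by auto
  have "openin (quot_topology X q) (q ` topspace X)"
    unfolding openin_quot_topology e by simp
  then show "q ` topspace X \<subseteq> topspace (quot_topology X q)" by (rule openin_subset)
qed

lemma quotient_map_quot: "quotient_map X (quot_topology X q) q"
  unfolding quotient_map_def topspace_quot by (auto simp: openin_quot_topology)

lemma quotient_map_unique:
  assumes "quotient_map X Y f" "quotient_map X Y' f" shows "Y = Y'"
proof -
  have t: "topspace Y = topspace Y'" using assms by (simp add: quotient_map_def)
  show ?thesis unfolding topology_eq
    using assms t unfolding quotient_map_def by (metis openin_subset)
qed

definition fr where "fr Z d = face_rel Z d \<union> (face_rel Z d)\<inverse>"

lemma real_class_eq:
  "real_class Z d p = (if p \<in> topspace (total_space Z) then {q. (p,q) \<in> (fr Z d)\<^sup>*} else {})"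
  by (auto simp: real_class_def real_rel_def fr_def)

lemma real_class_idem: "real_rel Z d `` real_class Z d p = real_class Z d p"
proof
  show "real_rel Z d `` real_class Z d p \<subseteq> real_class Z d p"
  proof
    fix y assume "y \<in> real_rel Z d `` real_class Z d p"
    then obtain x where "(p,x) \<in> real_rel Z d" "(x,y) \<in> real_rel Z d"
      unfolding real_class_def by blast
    then show "y \<in> real_class Z d p"
      unfolding real_class_def real_rel_def by (auto intro: rtrancl_trans)
  qed
  show "real_class Z d p \<subseteq> real_rel Z d `` real_class Z d p"
  proof
    fix y assume y: "y \<in> real_class Z d p"
    then have "p \<in> topspace (total_space Z)" unfolding real_class_def real_rel_def by blast
    then have "p \<in> real_class Z d p" unfolding real_class_def real_rel_def by blast
    then show "y \<in> real_rel Z d `` real_class Z d p" using y unfolding real_class_def by blast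
  qed
qed

lemma topspace_sub_ss:
  assumes "semi_simplicial_subspace Z d S" shows "topspace (sub_ss Z S n) = S n"
  using assms by (auto simp: sub_ss_def semi_simplicial_subspace_def)

lemma topA:
  assumes "semi_simplicial_subspace Z d S"
  shows "topspace (total_space (sub_ss Z S)) = Sigma UNIV (\<lambda>n. std_simplex n \<times> S n)"
  using topspace_sub_ss[OF assms] by (simp add: topspace_total_space)

lemma face_rel_sub:
  assumes "semi_simplicial_subspace Z d S"
  shows "face_rel (sub_ss Z S) d \<subseteq> face_rel Z d"
proof
  fix x assume "x \<in> face_rel (sub_ss Z S) d"
  then obtain n i t z where x: "x = ((Suc n, (coface i t, z)), (n, (t, d n i z)))"
    and c: "i \<le> Suc n" "t \<in> std_simplex n" "z \<in> topspace (sub_ss Z S (Suc n))"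
    unfolding face_rel_def by blast
  have "z \<in> topspace (Z (Suc n))" using c(3) by (simp add: sub_ss_def)
  then show "x \<in> face_rel Z d" unfolding face_rel_def x using c(1,2) by blast
qed

lemma fr_sub:
  assumes "semi_simplicial_subspace Z d S"
  shows "fr (sub_ss Z S) d \<subseteq> fr Z d"
  using face_rel_sub[OF assms] unfolding fr_def by blast

lemma A_sub:
  assumes "semi_simplicial_subspace Z d S"
  shows "topspace (total_space (sub_ss Z S)) \<subseteq> topspace (total_space Z)"
proof -
  have "topspace (sub_ss Z S n) \<subseteq> topspace (Z n)" for n by (simp add: sub_ss_def)
  then show ?thesis unfolding topspace_total_space by auto
qed

lemma real_rel_sub:
  assumes "semi_simplicial_subspace Z d S"
  shows "real_rel (sub_ss Z S) d \<subseteq> real_rel Z d"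
proof
  fix x assume x: "x \<in> real_rel (sub_ss Z S) d"
  obtain a b where ab: "x = (a,b)" by (cases x)
  have "a \<in> topspace (total_space (sub_ss Z S))" "(a,b) \<in> (fr (sub_ss Z S) d)\<^sup>*"
    using x ab by (auto simp: real_rel_def fr_def)
  then have "a \<in> topspace (total_space Z)" "(a,b) \<in> (fr Z d)\<^sup>*"
    using A_sub[OF assms] rtrancl_mono[OF fr_sub[OF assms]] by blast+
  then show "x \<in> real_rel Z d" using ab by (simp add: real_rel_def fr_def)
qed

lemma fr_step:
  assumes sub: "semi_simplicial_subspace Z d S" and full: "full_rel Z d S"
    and pq: "(p,q) \<in> fr Z d" and pA: "p \<in> topspace (total_space (sub_ss Z S))"
  shows "q \<in> topspace (total_space (sub_ss Z S)) \<and> (p,q) \<in> fr (sub_ss Z S) d"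
proof -
  note A = topA[OF sub]
  note tY = topspace_sub_ss[OF sub]
  have Ssub: "S n \<subseteq> topspace (Z n)" for n using sub by (simp add: semi_simplicial_subspace_def)
  have Sd: "i \<le> Suc n \<Longrightarrow> y \<in> S (Suc n) \<Longrightarrow> d n i y \<in> S n" for n i y
    using sub by (simp add: semi_simplicial_subspace_def)
  from pq consider "(p,q) \<in> face_rel Z d" | "(q,p) \<in> face_rel Z d" unfolding fr_def by blast
  then show ?thesis
  proof cases
    case 1
    then obtain n i t z where e: "p = (Suc n, (coface i t, z))" "q = (n, (t, d n i z))"
      and c: "i \<le> Suc n" "t \<in> std_simplex n" "z \<in> topspace (Z (Suc n))"
      unfolding face_rel_def by blast
    from pA e A have zS: "z \<in> S (Suc n)" by auto
    have "q \<in> topspace (total_space (sub_ss Z S))" using e c zS Sd A by auto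
    moreover have "(p,q) \<in> face_rel (sub_ss Z S) d"
      unfolding face_rel_def e using c zS tY by blast
    ultimately show ?thesis unfolding fr_def by blast
  next
    case 2
    then obtain n i t z where e: "q = (Suc n, (coface i t, z))" "p = (n, (t, d n i z))"
      and c: "i \<le> Suc n" "t \<in> std_simplex n" "z \<in> topspace (Z (Suc n))"
      unfolding face_rel_def by blast
    have cof: "coface i t \<in> std_simplex (Suc n)" using coface_simplex c by blast
    define cl where "cl = real_class (sub_ss Z S) d p"
    have pTZ: "p \<in> topspace (total_space Z)" using pA A_sub[OF sub] by blast
    have qTZ: "q \<in> topspace (total_space Z)" using e c cof by (simp add: topspace_total_space)
    have clsub: "cl \<subseteq> real_class Z d p"
      using real_rel_sub[OF sub] unfolding cl_def real_class_def by blast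
    have pcl: "p \<in> cl" using pA unfolding cl_def real_class_def real_rel_def by blast
    have ind: "induced_real_map Z d cl = real_class Z d p"
    proof
      show "induced_real_map Z d cl \<subseteq> real_class Z d p"
        using Image_mono[OF order_refl clsub, of "real_rel Z d"] real_class_idem[of Z d p]
        unfolding induced_real_map_def by blast
      show "real_class Z d p \<subseteq> induced_real_map Z d cl"
        using pcl unfolding induced_real_map_def real_class_def by blast
    qed
    have qp: "(q,p) \<in> (fr Z d)\<^sup>*" "(p,q) \<in> (fr Z d)\<^sup>*" using 2 unfolding fr_def by auto
    have eqc: "real_class Z d q = real_class Z d p"
      unfolding real_class_eq using pTZ qTZ qp by (auto intro: rtrancl_trans)
    have sk: "cl \<in> skeleton (sub_ss Z S) d (Suc n)"
      unfolding skeleton_def cl_def using pA e by auto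
    have tgt: "((coface i t, z), cl) \<in> {((t, z), c). (t, z) \<in> std_simplex (Suc n) \<times> topspace (Z (Suc n)) \<and>
                      c \<in> skeleton (sub_ss Z S) d (Suc n) \<and>
                      real_class Z d (Suc n, (t, z)) = induced_real_map Z d c}"
      using cof c sk eqc ind e by simp
    from full have "bij_betw
        (\<lambda>(t, y). ((t, y), real_class (sub_ss Z S) d (Suc n, (t, y))))
        (std_simplex (Suc n) \<times> topspace (sub_ss Z S (Suc n)))
        {((t, z), c). (t, z) \<in> std_simplex (Suc n) \<times> topspace (Z (Suc n)) \<and>
                      c \<in> skeleton (sub_ss Z S) d (Suc n) \<and>
                      real_class Z d (Suc n, (t, z)) = induced_real_map Z d c}"
      unfolding full_rel_def by blast
    from bij_betw_imp_surj_on[OF this] tgt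
    obtain t' y where "(t', y) \<in> std_simplex (Suc n) \<times> topspace (sub_ss Z S (Suc n))"
      "((coface i t, z), cl) = ((t', y), real_class (sub_ss Z S) d (Suc n, (t', y)))"
      by (smt (verit, best) case_prod_conv imageE prod.collapse)
    then have zS: "z \<in> S (Suc n)" using tY by auto
    have "q \<in> topspace (total_space (sub_ss Z S))" using e cof zS A by auto
    moreover have "(q,p) \<in> face_rel (sub_ss Z S) d"
      unfolding face_rel_def e using c zS tY by blast
    ultimately show ?thesis unfolding fr_def by blast
  qed
qed

lemma steps:
  assumes sub: "semi_simplicial_subspace Z d S" and full: "full_rel Z d S"
    and pq: "(p,q) \<in> (fr Z d)\<^sup>*" and pA: "p \<in> topspace (total_space (sub_ss Z S))"
  shows "q \<in> topspace (total_space (sub_ss Z S)) \<and> (p,q) \<in> (fr (sub_ss Z S) d)\<^sup>*"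
  using pq
proof (induction rule: rtrancl_induct)
  case base
  then show ?case using pA by simp
next
  case (step y z)
  then show ?case using fr_step[OF sub full, of y z] by (meson rtrancl.rtrancl_into_rtrancl)
qed

lemma class_eq:
  assumes sub: "semi_simplicial_subspace Z d S" and full: "full_rel Z d S"
    and pA: "p \<in> topspace (total_space (sub_ss Z S))"
  shows "real_class (sub_ss Z S) d p = real_class Z d p"
proof -
  have pTZ: "p \<in> topspace (total_space Z)" using pA A_sub[OF sub] by blast
  show ?thesis unfolding real_class_eq using pA pTZ steps[OF sub full _ pA]
      rtrancl_mono[OF fr_sub[OF sub]] by auto
qed

lemma saturated:
  assumes sub: "semi_simplicial_subspace Z d S" and full: "full_rel Z d S"
    and xT: "x \<in> topspace (total_space Z)" and pA: "p \<in> topspace (total_space (sub_ss Z S))"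
    and eq: "real_class Z d x = real_class Z d p"
  shows "x \<in> topspace (total_space (sub_ss Z S))"
proof -
  have "x \<in> real_class Z d x" using xT by (simp add: real_class_eq)
  then have "(p,x) \<in> (fr Z d)\<^sup>*" using eq by (simp add: real_class_eq split: if_splits)
  then show ?thesis using steps[OF sub full _ pA] by blast
qed

theorem lemma6p5:
  fixes Z :: "nat \<Rightarrow> 'a topology" and d :: "nat \<Rightarrow> nat \<Rightarrow> 'a \<Rightarrow> 'a"
    and S :: "nat \<Rightarrow> 'a set"
  assumes "semi_simplicial_space Z d"
    and "semi_simplicial_subspace Z d S"
    and "full_rel Z d S"
  shows "((\<forall>n. closedin (Z n) (S n)) \<longrightarrow>
           closed_inclusion (geom_real (sub_ss Z S) d) (geom_real Z d) (induced_real_map Z d))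
       \<and> ((\<forall>n. openin (Z n) (S n)) \<longrightarrow>
           open_inclusion (geom_real (sub_ss Z S) d) (geom_real Z d) (induced_real_map Z d))"
proof -
  note sub = assms(2) and full = assms(3)
  define TZ where "TZ = total_space Z"
  define TY where "TY = total_space (sub_ss Z S)"
  define A where "A = topspace TY"
  define im where "im = real_class Z d ` A"
  define GY where "GY = geom_real (sub_ss Z S) d"
  define GZ where "GZ = geom_real Z d"
  define ind where "ind = induced_real_map Z d"
  have QZ: "quotient_map TZ GZ (real_class Z d)"
    unfolding GZ_def geom_real_def TZ_def by (rule quotient_map_quot)
  have QY: "quotient_map TY GY (real_class (sub_ss Z S) d)"
    unfolding GY_def geom_real_def TY_def by (rule quotient_map_quot)
  have ceq: "x \<in> A \<Longrightarrow> real_class (sub_ss Z S) d x = real_class Z d x" for x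
    using class_eq[OF sub full] unfolding A_def TY_def by blast
  have topY: "topspace GY = im"
    unfolding GY_def geom_real_def topspace_quot im_def A_def[symmetric] TY_def[symmetric]
    using ceq by (rule image_cong[OF refl])
  have indid: "ind c = c" if "c \<in> im" for c
    using that real_class_idem unfolding im_def ind_def induced_real_map_def by blast
  have indim: "ind ` topspace GY = im"
    unfolding topY using indid by force
  have AT: "A \<subseteq> topspace TZ" using A_sub[OF sub] unfolding A_def TY_def TZ_def .
  have pre: "{x \<in> topspace TZ. real_class Z d x \<in> im} = A"
  proof
    show "{x \<in> topspace TZ. real_class Z d x \<in> im} \<subseteq> A"
      using saturated[OF sub full] unfolding im_def A_def TY_def TZ_def by blast
    show "A \<subseteq> {x \<in> topspace TZ. real_class Z d x \<in> im}"
      using AT unfolding im_def by blast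
  qed
  have ctop: "closedin (top_of_set T) T" for T :: "(nat \<Rightarrow> real) set"
    using closedin_topspace[of "top_of_set T"] by simp
  have otop: "openin (top_of_set T) T" for T :: "(nat \<Rightarrow> real) set"
    using openin_topspace[of "top_of_set T"] by simp
  have Aeq: "A = Sigma UNIV (\<lambda>n. std_simplex n \<times> S n)"
    unfolding A_def TY_def by (rule topA[OF sub])
  have subtop: "TY = subtopology TZ A"
  proof -
    have "prod_topology (top_of_set (std_simplex n)) (sub_ss Z S n) =
          subtopology (prod_topology (top_of_set (std_simplex n)) (Z n)) (std_simplex n \<times> S n)" for n
      by (simp only: sub_ss_def prod_topology_subtopology(2) topspace_euclidean_subtopology)
    note eq = this
    show ?thesis
      unfolding TY_def TZ_def Aeq total_space_def by (simp only: subtopology_sum_topology eq)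
  qed
  have imsub: "im \<subseteq> topspace GZ"
  proof -
    have "real_class Z d ` topspace TZ = topspace GZ" using QZ by (simp add: quotient_map_def)
    then show ?thesis unfolding im_def using AT by blast
  qed
  have emb: "embedding_map GY GZ ind"
    if oc: "openin GZ im \<or> closedin GZ im"
  proof -
    have q1: "quotient_map (subtopology TZ A) (subtopology GZ im) (real_class Z d)"
      by (rule quotient_map_restriction[OF QZ pre oc])
    have q2: "quotient_map TY (subtopology GZ im) (real_class (sub_ss Z S) d)"
      by (rule quotient_map_eq[OF q1[folded subtop]]) (metis ceq A_def)
    have Yeq: "GY = subtopology GZ im" by (rule quotient_map_unique[OF QY q2])
    have "homeomorphic_map GY GY ind"
      by (rule homeomorphic_map_eq[of _ _ id]) (simp_all add: indid topY)
    then show ?thesis unfolding embedding_map_def indim Yeq[symmetric] .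
  qed
  show ?thesis
  proof (intro conjI impI)
    assume cl: "\<forall>n. closedin (Z n) (S n)"
    have "closedin TZ A"
      unfolding TZ_def Aeq total_space_def closedin_disjoint_union
      using cl by (simp add: closedin_prod_Times_iff ctop)
    from QZ have "\<forall>U. U \<subseteq> topspace GZ \<longrightarrow> (closedin TZ {x. x \<in> topspace TZ \<and> real_class Z d x \<in> U} \<longleftrightarrow> closedin GZ U)"
      unfolding quotient_map_closedin by blast
    then have "closedin TZ {x \<in> topspace TZ. real_class Z d x \<in> im} \<longleftrightarrow> closedin GZ im"
      using imsub by blast
    with \<open>closedin TZ A\<close> have "closedin GZ im" unfolding pre by simp
    then show "closed_inclusion (geom_real (sub_ss Z S) d) (geom_real Z d) (induced_real_map Z d)"
      unfolding GY_def[symmetric] GZ_def[symmetric] ind_def[symmetric] closed_inclusion_def indim using emb by blast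
  next
    assume op: "\<forall>n. openin (Z n) (S n)"
    have "openin TZ A"
      unfolding TZ_def Aeq total_space_def openin_disjoint_union
      using op by (simp add: openin_prod_Times_iff otop)
    from QZ have "\<forall>U. U \<subseteq> topspace GZ \<longrightarrow> (openin TZ {x. x \<in> topspace TZ \<and> real_class Z d x \<in> U} \<longleftrightarrow> openin GZ U)"
      unfolding quotient_map_def by blast
    then have "openin TZ {x \<in> topspace TZ. real_class Z d x \<in> im} \<longleftrightarrow> openin GZ im"
      using imsub by blast
    with \<open>openin TZ A\<close> have "openin GZ im" unfolding pre by simp
    then show "open_inclusion (geom_real (sub_ss Z S) d) (geom_real Z d) (induced_real_map Z d)"
      unfolding GY_def[symmetric] GZ_def[symmetric] ind_def[symmetric] open_inclusion_def indim using emb by blast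
  qed
qed

end
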